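(* Let $0<\underline\beta<\bar\beta$, $\alpha,\xi>0$, and let $\varphi$, $\omega$ and $\mathcal{J}(\beta,D)$ be as in the context. Then there exists a parameter set $\mathcal{P}(\underline\beta,\bar\beta)$ (not depending on $D$) such that for every positive even integer $D$ and every $\beta\in[\underline\beta,\bar\beta]$, $\mathcal{J}(\beta,D)\subset\mathcal{H}(\beta,\mathcal{P}(\underline\beta,\bar\beta))$.
   Context: $\psi(x)=\pi^{-1/2}e^{-x^2}$. For $\beta>0$, $r$ is the largest integer strictly less than $\beta$. A parameter set $\mathcal{P}=\{\gamma,l^+,L,\varepsilon,C,\alpha,\xi,M\}$ consists of a polynomial $L$ and constants; $\mathcal{H}(\beta,\mathcal{P})$ is the set of probability densities $f$ on $\mathbb{R}$ with: $\ln f$ $r$ times differentiable, $|(\ln f)^{(r)}(x)-(\ln f)^{(r)}(y)|\le r!L(x)|y-x|^{\beta-r}$ when $|x-y|\le\gamma$, $|(\ln f)^{(j)}(0)|\le l^+$ ($j=0..r$); $\int|(\ln f)^{(j)}|^{(2\beta+\varepsilon)/j}f\le C$ ($j=1..r$), $\int|L|^{2+\varepsilon/\beta}f\le C$; $f\le M\psi$; $f>0$, nondecreasing on $(-\infty,-\alpha)$, nonincreasing on $(\alpha,\infty)$, $f\ge\xi$ on $[-\alpha,\alpha]$. Construction: $\varphi$ infinitely differentiable, supported in $(1/4,3/4)$, $\int\varphi=0$, $\int\varphi^2=1$; $A=\max_{0\le k\le r+1}\|\varphi^{(k)}\|_\infty>1$; for $D$ a positive even integer and $j=1,\dots,D$,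 $\varphi_j(x)=\frac{\xi D^{-\beta}}{A}\varphi\big(\frac D\alpha(x+\frac\alpha2)-(j-1)\big)$. $\mathcal{T}(\alpha,\xi)$: functions $\omega:\mathbb{R}\to\mathbb{R}^+$ nondecreasing on $(-\infty,-\alpha/2)$, nonincreasing on $(\alpha/2,\infty)$, $\omega=2\xi$ on $[-3\alpha/4,3\alpha/4]$, $\omega(\pm\alpha)=\xi$. Fix $\tilde{\mathcal P}=\{\alpha/4,\ln(2\xi),\tilde L,\tilde\varepsilon,\tilde C,\alpha,\xi,\tilde M\}$ and $\omega\in\mathcal{T}(\alpha,\xi)\cap\mathcal{H}(\beta,\tilde{\mathcal P})$ for all $\beta\in[\underline\beta,\bar\beta]$. For $\theta\in\{0,1\}^D$, $f_\theta=\omega+\sum_{j=1}^D(2\theta_j-1)\varphi_j$, and $\mathcal{J}(\beta,D)=\{f_\theta:\theta\in\{0,1\}^D\}$. *)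

theory Defs
  imports "HOL-Analysis.Analysis" "HOL-Computational_Algebra.Polynomial"
begin

definition psi :: "real \<Rightarrow> real" where
  "psi x = exp (- (x^2)) / sqrt pi"

text \<open>r = largest integer strictly less than beta (beta > 0).\<close>
definition rr :: "real \<Rightarrow> nat" where
  "rr beta = nat (\<lceil>beta\<rceil> - 1)"

definition dj :: "nat \<Rightarrow> (real \<Rightarrow> real) \<Rightarrow> real \<Rightarrow> real" where
  "dj j g = (deriv ^^ j) g"

definition times_differentiable :: "nat \<Rightarrow> (real \<Rightarrow> real) \<Rightarrow> bool" where
  "times_differentiable r g \<longleftrightarrow> (\<forall>j<r. \<forall>x. dj j g differentiable at x)"

definition smooth_fun :: "(real \<Rightarrow> real) \<Rightarrow> bool" where
  "smooth_fun g \<longleftrightarrow> (\<forall>j x. dj j g differentiable at x)"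

record params =
  gam :: real
  lplus :: real
  Lp :: "real poly"
  eps :: real
  Cc :: real
  alph :: real
  xi :: real
  Mm :: real

text \<open>Constants of a parameter set (l+ is allowed to be any real, e.g. ln(2 xi)).\<close>
definition valid_params :: "params \<Rightarrow> bool" where
  "valid_params P \<longleftrightarrow> gam P > 0 \<and> eps P > 0 \<and> Cc P > 0 \<and> alph P > 0 \<and> xi P > 0 \<and> Mm P > 0"

definition is_density :: "(real \<Rightarrow> real) \<Rightarrow> bool" where
  "is_density f \<longleftrightarrow> f \<in> borel_measurable borel \<and> (\<forall>x. f x \<ge> 0)
      \<and> (\<integral>\<^sup>+ x. ennreal (f x) \<partial>lborel) = 1"

definition HH :: "real \<Rightarrow> params \<Rightarrow> (real \<Rightarrow> real) set" where
  "HH beta P = {f. is_density f \<and>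
     (let g = (\<lambda>x. ln (f x)); r = rr beta; L = (\<lambda>x. poly (Lp P) x) in
       times_differentiable r g
     \<and> (\<forall>x y. \<bar>x - y\<bar> \<le> gam P \<longrightarrow>
          \<bar>dj r g x - dj r g y\<bar> \<le> fact r * L x * \<bar>y - x\<bar> powr (beta - real r))
     \<and> (\<forall>j\<le>r. \<bar>dj j g 0\<bar> \<le> lplus P)
     \<and> (\<forall>j\<in>{1..r}. (\<integral>\<^sup>+ x. ennreal (\<bar>dj j g x\<bar> powr ((2 * beta + eps P) / real j) * f x) \<partial>lborel)
            \<le> ennreal (Cc P))
     \<and> (\<integral>\<^sup>+ x. ennreal (\<bar>L x\<bar> powr (2 + eps P / beta) * f x) \<partial>lborel) \<le> ennreal (Cc P)
     \<and> (\<forall>x. f x \<le> Mm P * psi x)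
     \<and> (\<forall>x. f x > 0)
     \<and> mono_on {..< - alph P} f
     \<and> antimono_on {alph P <..} f
     \<and> (\<forall>x\<in>{- alph P .. alph P}. f x \<ge> xi P))}"

definition supnorm :: "(real \<Rightarrow> real) \<Rightarrow> real" where
  "supnorm g = (SUP x. \<bar>g x\<bar>)"

definition AA :: "(real \<Rightarrow> real) \<Rightarrow> real \<Rightarrow> real" where
  "AA phi beta = Max ((\<lambda>k. supnorm (dj k phi)) ` {0..rr beta + 1})"

definition phij :: "(real \<Rightarrow> real) \<Rightarrow> real \<Rightarrow> real \<Rightarrow> real \<Rightarrow> nat \<Rightarrow> nat \<Rightarrow> real \<Rightarrow> real" where
  "phij phi alpha xi' beta D j x =
     xi' * real D powr (- beta) / AA phi beta * phi (real D / alpha * (x + alpha / 2) - (real j - 1))"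

definition TT :: "real \<Rightarrow> real \<Rightarrow> (real \<Rightarrow> real) set" where
  "TT alpha xi' = {w. (\<forall>x. w x \<ge> 0) \<and> mono_on {..< - alpha / 2} w \<and> antimono_on {alpha / 2 <..} w
      \<and> (\<forall>x\<in>{- 3 * alpha / 4 .. 3 * alpha / 4}. w x = 2 * xi')
      \<and> w alpha = xi' \<and> w (- alpha) = xi'}"

definition ftheta :: "(real \<Rightarrow> real) \<Rightarrow> (real \<Rightarrow> real) \<Rightarrow> real \<Rightarrow> real \<Rightarrow> real \<Rightarrow> nat \<Rightarrow> (nat \<Rightarrow> bool) \<Rightarrow> real \<Rightarrow> real" where
  "ftheta w phi alpha xi' beta D theta x =
     w x + (\<Sum>j = 1..D. (if theta j then 1 else -1) * phij phi alpha xi' beta D j x)"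

definition JJ :: "(real \<Rightarrow> real) \<Rightarrow> (real \<Rightarrow> real) \<Rightarrow> real \<Rightarrow> real \<Rightarrow> real \<Rightarrow> nat \<Rightarrow> (real \<Rightarrow> real) set" where
  "JJ w phi alpha xi' beta D = {ftheta w phi alpha xi' beta D theta | theta. True}"

end

theory Submission
  imports Defs
begin


lemma dj_0[simp]: "dj 0 f = f" by (simp add: dj_def)
lemma dj_Suc: "dj (Suc k) f = dj k (deriv f)" by (simp add: dj_def funpow_Suc_right del: funpow.simps)
lemma dj_Suc': "dj (Suc k) f = deriv (dj k f)" by (simp add: dj_def)
lemma dj_add_idx: "dj j (dj k f) = dj (j + k) f" by (simp add: dj_def funpow_add)

lemma rdiff: "(f::real\<Rightarrow>real) differentiable at x \<Longrightarrow> DERIV f x :> deriv f x"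
  using DERIV_deriv_iff_real_differentiable by blast

lemma smooth_funD: "smooth_fun f \<Longrightarrow> f differentiable at x"
  unfolding smooth_fun_def by (metis dj_0)

lemma smooth_funD': "smooth_fun f \<Longrightarrow> dj k f differentiable at x"
  unfolding smooth_fun_def by blast

lemma smooth_fun_deriv: "smooth_fun f \<Longrightarrow> smooth_fun (deriv f)"
  unfolding smooth_fun_def by (metis dj_Suc)

lemma smooth_fun_dj: "smooth_fun f \<Longrightarrow> smooth_fun (dj k f)"
  unfolding smooth_fun_def by (simp add: dj_add_idx)

lemma smooth_closed:
  assumes S: "\<And>f. f \<in> S \<Longrightarrow> (\<forall>x. f differentiable at x) \<and> deriv f \<in> S" and f: "f \<in> S"
  shows "smooth_fun f"
proof -
  have "\<forall>f\<in>S. dj j f \<in> S" for j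
    by (induction j) (auto simp: dj_Suc S)
  then show ?thesis using S f unfolding smooth_fun_def by blast
qed

inductive_set SG :: "(real \<Rightarrow> real) \<Rightarrow> (real \<Rightarrow> real) set" for q where
  base: "smooth_fun f \<Longrightarrow> f \<in> SG q"
| qq: "q \<in> SG q"
| add: "f \<in> SG q \<Longrightarrow> g \<in> SG q \<Longrightarrow> (\<lambda>x. f x + g x) \<in> SG q"
| mul: "f \<in> SG q \<Longrightarrow> g \<in> SG q \<Longrightarrow> (\<lambda>x. f x * g x) \<in> SG q"

lemma SG_deriv:
  assumes q1: "\<And>x. q differentiable at x" and q2: "deriv q \<in> SG q"
  shows "f \<in> SG q \<Longrightarrow> (\<forall>x. f differentiable at x) \<and> deriv f \<in> SG q"
proof (induction f rule: SG.induct)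
  case (base f)
  then show ?case by (auto intro: SG.base smooth_funD smooth_fun_deriv)
next
  case qq
  then show ?case using q1 q2 by auto
next
  case (add f g)
  have "deriv (\<lambda>x. f x + g x) = (\<lambda>x. deriv f x + deriv g x)"
    using add by (auto intro!: DERIV_imp_deriv derivative_intros rdiff)
  then show ?case using add by (auto intro: SG.add)
next
  case (mul f g)
  have "DERIV (\<lambda>x. f x * g x) x :> deriv f x * g x + deriv g x * f x" for x
    using mul by (intro DERIV_mult rdiff) auto
  then have "deriv (\<lambda>x. f x * g x) = (\<lambda>x. deriv f x * g x + f x * deriv g x)"
    by (auto intro!: DERIV_imp_deriv simp: mult.commute)
  then show ?case using mul by (auto intro!: SG.add SG.mul)
qed

lemma SG_smooth:
  assumes "\<And>x. q differentiable at x" "deriv q \<in> SG q" "f \<in> SG q"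
  shows "smooth_fun f"
  using smooth_closed[of "SG q" f] SG_deriv[OF assms(1,2)] assms(3) by blast

lemma smooth_add: "smooth_fun f \<Longrightarrow> smooth_fun g \<Longrightarrow> smooth_fun (\<lambda>x. f x + g x)"
  using SG_smooth[of "\<lambda>x. 0" "\<lambda>x. f x + g x"] by (auto intro: SG.intros)

lemma smooth_mul: "smooth_fun f \<Longrightarrow> smooth_fun g \<Longrightarrow> smooth_fun (\<lambda>x. f x * g x)"
  using SG_smooth[of "\<lambda>x. 0" "\<lambda>x. f x * g x"] by (auto intro: SG.intros)

lemma smooth_const: "smooth_fun (\<lambda>x. c)"
proof (rule smooth_closed[of "{\<lambda>x. d | d. True}"])
  fix f :: "real \<Rightarrow> real" assume "f \<in> {\<lambda>x. d | d. True}"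
  then obtain d where "f = (\<lambda>x. d)" by blast
  then show "(\<forall>x. f differentiable at x) \<and> deriv f \<in> {\<lambda>x. d | d. True}" by auto
qed auto

lemma smooth_sum: "finite A \<Longrightarrow> (\<And>i. i \<in> A \<Longrightarrow> smooth_fun (f i)) \<Longrightarrow> smooth_fun (\<lambda>x. \<Sum>i\<in>A. f i x)"
  by (induction A rule: finite_induct) (auto intro: smooth_add smooth_const)

lemma smooth_affine:
  assumes "smooth_fun f" shows "smooth_fun (\<lambda>x. c * f (a * x + b))"
proof -
  let ?S = "{(\<lambda>x. c * g (a * x + b)) | c g. smooth_fun g}"
  have "h \<in> ?S \<Longrightarrow> (\<forall>x. h differentiable at x) \<and> deriv h \<in> ?S" for h
  proof -
    assume "h \<in> ?S"
    then obtain c g where h: "h = (\<lambda>x. c * g (a * x + b))" and g: "smooth_fun g" by blast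
    have D: "DERIV h x :> c * (deriv g (a * x + b) * a)" for x
      unfolding h using smooth_funD[OF g]
      by (auto intro!: derivative_eq_intros DERIV_chain2[where f = g] rdiff)
    then have "deriv h = (\<lambda>x. (c * a) * deriv g (a * x + b))"
      by (auto intro!: DERIV_imp_deriv simp: algebra_simps)
    then show ?thesis using D smooth_fun_deriv[OF g] real_differentiable_def by blast
  qed
  then show ?thesis using smooth_closed[of ?S] assms by blast
qed

lemma dj_affine:
  assumes "smooth_fun f" shows "dj k (\<lambda>x. c * f (a * x + b)) = (\<lambda>x. c * a ^ k * dj k f (a * x + b))"
  using assms
proof (induction k arbitrary: c f)
  case 0 then show ?case by simp
next
  case (Suc k)
  have D: "DERIV (\<lambda>x. c * f (a * x + b)) x :> c * (deriv f (a * x + b) * a)" for x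
    using smooth_funD[OF Suc.prems]
    by (auto intro!: derivative_eq_intros DERIV_chain2[where f = f] rdiff)
  then have "deriv (\<lambda>x. c * f (a * x + b)) = (\<lambda>x. (c * a) * deriv f (a * x + b))"
    by (auto intro!: DERIV_imp_deriv simp: algebra_simps)
  then show ?case using Suc.IH[of "deriv f" "c * a"] smooth_fun_deriv[OF Suc.prems]
    by (simp add: dj_Suc[of k] dj_Suc[of k f] algebra_simps)
qed

lemma dj_add:
  assumes "smooth_fun f" "smooth_fun g" shows "dj k (\<lambda>x. f x + g x) = (\<lambda>x. dj k f x + dj k g x)"
  using assms
proof (induction k arbitrary: f g)
  case 0 then show ?case by simp
next
  case (Suc k)
  have "deriv (\<lambda>x. f x + g x) = (\<lambda>x. deriv f x + deriv g x)"
    using Suc.prems by (auto intro!: DERIV_imp_deriv derivative_intros rdiff smooth_funD)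
  then show ?case using Suc.IH[of "deriv f" "deriv g"] Suc.prems
    by (simp add: dj_Suc smooth_fun_deriv)
qed

lemma dj_cmul:
  assumes "smooth_fun f" shows "dj k (\<lambda>x. c * f x) = (\<lambda>x. c * dj k f x)"
  using dj_affine[OF assms, of k c 1 0] by simp

lemma dj_sum:
  "finite A \<Longrightarrow> (\<And>i. i \<in> A \<Longrightarrow> smooth_fun (f i)) \<Longrightarrow> dj k (\<lambda>x. \<Sum>i\<in>A. f i x) = (\<lambda>x. \<Sum>i\<in>A. dj k (f i) x)"
proof (induction A rule: finite_induct)
  case empty then show ?case using dj_cmul[OF smooth_const[of 0], of k 0] by simp
next
  case (insert a A)
  then show ?case by (simp add: dj_add smooth_sum)
qed



lemma deriv_mul_fun:
  assumes "smooth_fun v" "smooth_fun w"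
  shows "deriv (\<lambda>x. v x * w x) = (\<lambda>x. deriv v x * w x + v x * deriv w x)"
proof -
  have "DERIV (\<lambda>x. v x * w x) x :> deriv v x * w x + deriv w x * v x" for x
    using assms by (intro DERIV_mult rdiff smooth_funD)
  then show ?thesis by (auto intro!: DERIV_imp_deriv simp: mult.commute)
qed

lemma prod_bound:
  fixes L :: real
  assumes "L \<ge> 0"
  shows "smooth_fun v \<Longrightarrow> smooth_fun w \<Longrightarrow> (\<forall>i\<le>k. \<forall>x. \<bar>dj i v x\<bar> \<le> a * L^i) \<Longrightarrow>
    (\<forall>i\<le>k. \<forall>x. \<bar>dj i w x\<bar> \<le> b * L^i) \<Longrightarrow> \<bar>dj k (\<lambda>x. v x * w x) x\<bar> \<le> 2^k * a * b * L^k"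
proof (induction k arbitrary: v w a b x)
  case 0
  then have "\<bar>v x\<bar> \<le> a" "\<bar>w x\<bar> \<le> b" by (metis dj_0 le0 power_0 mult_1_right)+
  then show ?case by (simp add: abs_mult mult_mono')
next
  case (Suc k)
  have sv: "smooth_fun (deriv v)" and sw: "smooth_fun (deriv w)" using Suc.prems smooth_fun_deriv by auto
  have e: "dj (Suc k) (\<lambda>x. v x * w x) x = dj k (\<lambda>x. deriv v x * w x) x + dj k (\<lambda>x. v x * deriv w x) x"
    using Suc.prems sv sw by (simp add: dj_Suc deriv_mul_fun dj_add smooth_mul)
  have bv: "\<forall>i\<le>k. \<forall>x. \<bar>dj i (deriv v) x\<bar> \<le> (a * L) * L^i"
    using Suc.prems(3) by (metis Suc_le_mono dj_Suc mult.assoc power_Suc dj_add_idx)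
  have bw: "\<forall>i\<le>k. \<forall>x. \<bar>dj i (deriv w) x\<bar> \<le> (b * L) * L^i"
    using Suc.prems(4) by (metis Suc_le_mono dj_Suc mult.assoc power_Suc dj_add_idx)
  have bv0: "\<forall>i\<le>k. \<forall>x. \<bar>dj i v x\<bar> \<le> a * L^i" and bw0: "\<forall>i\<le>k. \<forall>x. \<bar>dj i w x\<bar> \<le> b * L^i"
    using Suc.prems(3,4) by auto
  have 1: "\<bar>dj k (\<lambda>x. deriv v x * w x) x\<bar> \<le> 2^k * (a*L) * b * L^k"
    using Suc.IH[OF sv Suc.prems(2) bv bw0] .
  have 2: "\<bar>dj k (\<lambda>x. v x * deriv w x) x\<bar> \<le> 2^k * a * (b*L) * L^k"
    using Suc.IH[OF Suc.prems(1) sw bv0 bw] .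
  show ?case unfolding e using 1 2 by (simp add: algebra_simps)
qed



lemma smooth_cmul: "smooth_fun f \<Longrightarrow> smooth_fun (\<lambda>x. c * f x)"
  using smooth_affine[of f c 1 0] by simp

lemma smooth_of_deriv: "(\<And>x. f differentiable at x) \<Longrightarrow> smooth_fun (deriv f) \<Longrightarrow> smooth_fun f"
  unfolding smooth_fun_def by (metis dj_0 dj_Suc not0_implies_Suc)

fun EE :: "nat \<Rightarrow> real" where
  "EE 0 = 2" | "EE (Suc n) = EE n + 4^n * EE n ^ 2"

lemma EE_pos: "EE n \<ge> 2"
  by (induction n) (auto intro!: add_increasing2)

lemma EE_mono: "m \<le> n \<Longrightarrow> EE m \<le> EE n"
proof (induction n)
  case 0 then show ?case by simp
next
  case (Suc n) then show ?case by (cases "m = Suc n") (auto simp: le_Suc_eq intro: order_trans)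
qed

lemma ln_bound: "\<bar>t::real\<bar> \<le> 1/2 \<Longrightarrow> \<bar>ln (1 + t)\<bar> \<le> 2 * \<bar>t\<bar>"
proof -
  assume t: "\<bar>t\<bar> \<le> 1/2"
  have p: "1 + t > 0" using t by auto
  have up: "ln (1 + t) \<le> t" using ln_le_minus_one[OF p] by simp
  have "ln (1 / (1 + t)) \<le> 1 / (1 + t) - 1" using ln_le_minus_one p by simp
  then have lo: "ln (1 + t) \<ge> 1 - 1 / (1 + t)" using p by (simp add: ln_div)
  have "1 - 1 / (1 + t) = t / (1 + t)" using p by (simp add: field_simps)
  moreover have "t / (1 + t) \<ge> - 2 * \<bar>t\<bar>"
  proof (cases "t \<ge> 0")
    case True
    have "t / (1 + t) \<ge> 0" using True p by simp
    then show ?thesis using True by linarith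
  next
    case False
    then have "t / (1 + t) \<ge> t / (1/2)" using p t
      by (intro divide_left_mono_neg) auto
    then show ?thesis using False by simp
  qed
  ultimately show ?thesis using up lo by auto
qed

lemma ar1: fixes B L E :: real assumes "0 \<le> B" "B \<le> 1/2" "L \<ge> 0" "E \<ge> 0"
  shows "2^n * (B * L) * (2^n * E * E) * L^n \<le> (4^n * E ^2) * L^(Suc n)"
proof -
  have f4: "(4::real)^n = 2^n * 2^n" by (metis power_mult_distrib num_double numeral_times_numeral)
  have "2^n * (B * L) * (2^n * E * E) * L^n = B * ((2^n * 2^n) * E^2 * L^(Suc n))"
    by (simp add: power2_eq_square mult_ac)
  also have "\<dots> \<le> 1 * ((2^n * 2^n) * E^2 * L^(Suc n))"
    by (rule mult_right_mono) (use assms in auto)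
  finally show ?thesis by (simp add: f4)
qed

locale ubnd =
  fixes u :: "real \<Rightarrow> real" and B L :: real and N :: nat
  assumes su: "smooth_fun u" and B0: "0 \<le> B" and B1: "B \<le> 1/2" and L0: "L \<ge> 0"
    and ub: "\<And>x. \<bar>u x\<bar> \<le> B"
    and dub: "\<And>i x. 1 \<le> i \<Longrightarrow> i \<le> N \<Longrightarrow> \<bar>dj i u x\<bar> \<le> B * L^i"
begin

definition "q = (\<lambda>x. 1 / (1 + u x))"

lemma pos: "1 + u x \<ge> 1/2" using ub[of x] B1 by auto

lemma q_deriv: "DERIV q x :> - deriv u x * (q x * q x)"
proof -
  have "DERIV q x :> - deriv u x / (1 + u x)^2"
    unfolding q_def using pos[of x] smooth_funD[OF su]
    by (auto intro!: derivative_eq_intros rdiff simp: power2_eq_square)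
  then show ?thesis by (simp add: q_def power2_eq_square)
qed

lemma q_smooth: "smooth_fun q"
proof (rule SG_smooth)
  show "q differentiable at x" for x using q_deriv real_differentiable_def by blast
  have "deriv q = (\<lambda>x. (- deriv u x) * (q x * q x))"
    by (rule ext, rule DERIV_imp_deriv, rule q_deriv)
  moreover have "smooth_fun (\<lambda>x. - deriv u x)"
    using smooth_cmul[of "deriv u" "-1"] smooth_fun_deriv[OF su] by simp
  ultimately show "deriv q \<in> SG q"
    by (metis SG.mul SG.base SG.qq)
qed (rule SG.qq)

lemma q_bound: "n \<le> N \<Longrightarrow> \<forall>k\<le>n. \<forall>x. \<bar>dj k q x\<bar> \<le> EE n * L^k"
proof (induction n)
  case 0
  have "\<bar>q x\<bar> \<le> 2" for x using pos[of x] by (auto simp: q_def field_simps)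
  then show ?case by simp
next
  case (Suc n)
  have IH: "\<forall>k\<le>n. \<forall>x. \<bar>dj k q x\<bar> \<le> EE n * L^k" using Suc by simp
  have dq: "deriv q = (\<lambda>x. (- deriv u x) * (q x * q x))"
    by (rule ext, rule DERIV_imp_deriv, rule q_deriv)
  have sdu: "smooth_fun (\<lambda>x. - deriv u x)"
    using smooth_cmul[of "deriv u" "-1"] smooth_fun_deriv[OF su] by simp
  have "\<bar>dj k q x\<bar> \<le> EE (Suc n) * L^k" if k: "k \<le> Suc n" for k x
  proof (cases "k \<le> n")
    case True
    then have "\<bar>dj k q x\<bar> \<le> EE n * L^k" using IH by blast
    also have "\<dots> \<le> EE (Suc n) * L^k" by (rule mult_right_mono) (use EE_mono[of n "Suc n"] L0 in auto)
    finally show ?thesis .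
  next
    case False
    then have kk: "k = Suc n" using k by simp
    have b1: "\<forall>i\<le>n. \<forall>x. \<bar>dj i (\<lambda>x. - deriv u x) x\<bar> \<le> (B * L) * L^i"
    proof (intro allI impI)
      fix i y assume "i \<le> n"
      have "dj i (\<lambda>x. - deriv u x) = (\<lambda>x. - dj (Suc i) u x)"
        using dj_cmul[OF smooth_fun_deriv[OF su], of i "-1"] by (simp add: dj_Suc)
      moreover have "\<bar>dj (Suc i) u y\<bar> \<le> B * L^(Suc i)" using dub[of "Suc i" y] \<open>i \<le> n\<close> Suc.prems by simp
      ultimately show "\<bar>dj i (\<lambda>x. - deriv u x) y\<bar> \<le> (B * L) * L^i" by (simp add: mult.assoc)
    qed
    have b2: "\<forall>i\<le>n. \<forall>x. \<bar>dj i (\<lambda>x. q x * q x) x\<bar> \<le> (2^n * EE n * EE n) * L^i"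
    proof (intro allI impI)
      fix i y assume i: "i \<le> n"
      have "\<bar>dj i (\<lambda>x. q x * q x) y\<bar> \<le> 2^i * EE n * EE n * L^i"
        using prod_bound[OF L0 q_smooth q_smooth, of i "EE n" "EE n" y] IH i by auto
      also have "\<dots> \<le> (2^n * EE n * EE n) * L^i"
      proof -
        have "(2::real)^i \<le> 2^n" using i by (rule power_increasing) simp
        then have "2^i * (EE n * EE n) \<le> 2^n * (EE n * EE n)"
          by (rule mult_right_mono) (use EE_pos[of n] in auto)
        then have "(2^i * (EE n * EE n)) * L^i \<le> (2^n * (EE n * EE n)) * L^i"
          by (rule mult_right_mono) (use L0 in auto)
        then show ?thesis by (simp only: mult.assoc)
      qed
      finally show "\<bar>dj i (\<lambda>x. q x * q x) y\<bar> \<le> (2^n * EE n * EE n) * L^i" .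
    qed
    have e: "dj k q x = dj n (\<lambda>x. (- deriv u x) * (q x * q x)) x"
      unfolding kk dj_Suc dq ..
    have "\<bar>dj k q x\<bar> \<le> 2^n * (B * L) * (2^n * EE n * EE n) * L^n"
      unfolding e by (rule prod_bound[OF L0 sdu smooth_mul[OF q_smooth q_smooth] b1 b2])
    also have "\<dots> \<le> (4^n * EE n ^2) * L^k"
      using ar1[OF B0 B1 L0, of "EE n" n] EE_pos[of n] kk by simp
    also have "\<dots> \<le> EE (Suc n) * L^k"
    proof -
      have "4^n * EE n ^2 \<le> EE (Suc n)" using EE_pos[of n] by simp
      then show ?thesis using L0 by (simp add: mult_right_mono)
    qed
    finally show ?thesis .
  qed
  then show ?case by blast
qed

definition "h = (\<lambda>x. ln (1 + u x))"

lemma h_deriv: "DERIV h x :> deriv u x * q x"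
proof -
  have "DERIV h x :> deriv u x / (1 + u x)"
    unfolding h_def using pos[of x] smooth_funD[OF su]
    by (auto intro!: derivative_eq_intros rdiff)
  then show ?thesis by (simp add: q_def)
qed

lemma dh: "deriv h = (\<lambda>x. deriv u x * q x)"
  by (rule ext, rule DERIV_imp_deriv, rule h_deriv)

lemma h_smooth: "smooth_fun h"
proof (rule smooth_of_deriv)
  show "h differentiable at x" for x using h_deriv real_differentiable_def by blast
  show "smooth_fun (deriv h)" unfolding dh by (rule smooth_mul[OF smooth_fun_deriv[OF su] q_smooth])
qed

definition "KK = 2 + 2^N * EE N"

lemma h_bound: "k \<le> N \<Longrightarrow> \<bar>dj k h x\<bar> \<le> KK * B * L^k"
proof (cases k)
  case 0
  have "\<bar>h x\<bar> \<le> 2 * \<bar>u x\<bar>" unfolding h_def using ln_bound ub[of x] B1 by force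
  also have "\<dots> \<le> 2 * B" using ub[of x] by simp
  also have "\<dots> \<le> KK * B" unfolding KK_def by (rule mult_right_mono) (use B0 EE_pos[of N] in auto)
  finally show ?thesis using 0 by simp
next
  case (Suc m)
  assume kN: "k \<le> N"
  have b1: "\<forall>i\<le>m. \<forall>x. \<bar>dj i (deriv u) x\<bar> \<le> (B * L) * L^i"
  proof (intro allI impI)
    fix i y assume "i \<le> m"
    have "\<bar>dj (Suc i) u y\<bar> \<le> B * L^(Suc i)" using dub[of "Suc i" y] \<open>i \<le> m\<close> kN Suc by simp
    then show "\<bar>dj i (deriv u) y\<bar> \<le> (B * L) * L^i" by (simp add: dj_Suc mult.assoc)
  qed
  have b2: "\<forall>i\<le>m. \<forall>x. \<bar>dj i q x\<bar> \<le> EE N * L^i"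
    using q_bound[of N] kN Suc by auto
  have e: "dj k h x = dj m (\<lambda>x. deriv u x * q x) x" unfolding Suc dj_Suc dh ..
  have "\<bar>dj k h x\<bar> \<le> 2^m * (B * L) * EE N * L^m"
    unfolding e by (rule prod_bound[OF L0 smooth_fun_deriv[OF su] q_smooth b1 b2])
  also have "\<dots> = (2^m * EE N) * B * L^k" by (simp add: Suc algebra_simps)
  also have "\<dots> \<le> KK * B * L^k"
  proof -
    have "(2::real)^m \<le> 2^N" using kN Suc by (intro power_increasing) auto
    then have "2^m * EE N \<le> KK" unfolding KK_def using EE_pos[of N]
      by (smt (verit) mult_right_mono)
    then have "(2^m * EE N) * (B * L^k) \<le> KK * (B * L^k)" by (rule mult_right_mono) (use B0 L0 in auto)
    then show ?thesis by (simp add: mult.assoc)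
  qed
  finally show ?thesis .
qed

end



lemma sum_single_bound:
  fixes F :: "nat \<Rightarrow> real"
  assumes "finite I" "M \<ge> 0" "\<And>i. i \<in> I \<Longrightarrow> \<bar>F i\<bar> \<le> M"
    and "\<And>i j. i \<in> I \<Longrightarrow> j \<in> I \<Longrightarrow> F i \<noteq> 0 \<Longrightarrow> F j \<noteq> 0 \<Longrightarrow> i = j"
  shows "\<bar>\<Sum>i\<in>I. F i\<bar> \<le> M"
proof (cases "\<exists>i\<in>I. F i \<noteq> 0")
  case False
  then have "(\<Sum>i\<in>I. F i) = 0" by (intro sum.neutral) auto
  then show ?thesis using assms by simp
next
  case True
  then obtain i where i: "i \<in> I" "F i \<noteq> 0" by blast
  have "(\<Sum>i\<in>I. F i) = F i + (\<Sum>j\<in>I - {i}. F j)" using assms(1) i by (simp add: sum.remove)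
  also have "(\<Sum>j\<in>I - {i}. F j) = 0" using assms(4) i by (intro sum.neutral) blast
  finally show ?thesis using assms(3)[OF i(1)] by simp
qed

lemma mvt_bound:
  fixes F F' :: "real \<Rightarrow> real"
  assumes d: "\<And>z. DERIV F z :> F' z" and b: "\<And>z. \<bar>F' z\<bar> \<le> K"
  shows "\<bar>F x - F y\<bar> \<le> K * \<bar>x - y\<bar>"
proof -
  have *: "\<bar>F b - F a\<bar> \<le> K * \<bar>b - a\<bar>" if ab: "a < b" for a b
  proof -
    obtain z where "F b - F a = (b - a) * F' z" using MVT2[OF ab, of F F'] d by blast
    then have "\<bar>F b - F a\<bar> = \<bar>b - a\<bar> * \<bar>F' z\<bar>" by (simp add: abs_mult)
    also have "\<dots> \<le> \<bar>b - a\<bar> * K" using b[of z] by (intro mult_left_mono) auto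
    finally show ?thesis by (simp add: mult.commute)
  qed
  consider "x < y" | "x = y" | "y < x" by linarith
  then show ?thesis
  proof cases
    case 1 then show ?thesis using *[OF 1] by (simp add: abs_minus_commute)
  next
    case 2 then show ?thesis by simp
  next
    case 3 then show ?thesis using *[OF 3] by simp
  qed
qed

lemma holder_gen:
  fixes F F' :: "real \<Rightarrow> real"
  assumes d: "\<And>z. DERIV F z :> F' z" and b0: "\<And>z. \<bar>F z\<bar> \<le> Q" and b1: "\<And>z. \<bar>F' z\<bar> \<le> Q * lam"
    and lam: "lam > 0" and e: "0 < e" "e \<le> 1"
  shows "\<bar>F x - F y\<bar> \<le> 2 * Q * (lam * \<bar>x - y\<bar>) powr e"
proof -
  have Q0: "Q \<ge> 0" using b0[of 0] by linarith
  define W where "W = lam * \<bar>x - y\<bar>"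
  have W0: "W \<ge> 0" unfolding W_def using lam by simp
  have m: "\<bar>F x - F y\<bar> \<le> Q * W" using mvt_bound[OF d b1, of x y] unfolding W_def by (simp add: mult.assoc)
  have m2: "\<bar>F x - F y\<bar> \<le> 2 * Q" using b0[of x] b0[of y] by linarith
  show ?thesis
  proof (cases "W \<le> 1")
    case True
    have "W powr 1 \<le> W powr e" using powr_mono'[OF e(2) W0 True] .
    then have "W \<le> W powr e" using powr_one[OF W0] by simp
    then have "Q * W \<le> Q * W powr e" using Q0 by (simp add: mult_left_mono)
    moreover have "0 \<le> Q * W powr e" using Q0 by simp
    ultimately have "Q * W \<le> 2 * Q * W powr e" by linarith
    then show ?thesis using m unfolding W_def by linarith
  next
    case False
    then have "1 \<le> W powr e" using e by (intro ge_one_powr_ge_zero) auto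
    then have "2 * Q * 1 \<le> 2 * Q * W powr e" using Q0 by (intro mult_left_mono) auto
    then show ?thesis using m2 unfolding W_def by linarith
  qed
qed

locale prop1 =
  fixes blo bhi alpha xi' :: real and phi omega :: "real \<Rightarrow> real"
    and Lt :: "real poly" and epst Ct Mt :: real
  assumes a1: "0 < blo" and a2: "blo < bhi" and a3: "alpha > 0" and a4: "xi' > 0"
    and a5: "smooth_fun phi"
    and a6: "\<forall>x. x \<notin> {1/4 <..< 3/4} \<longrightarrow> phi x = 0"
    and a7: "(phi has_integral 0) UNIV"
    and a8: "((\<lambda>x. (phi x)^2) has_integral 1) UNIV"
    and a9: "valid_params \<lparr>gam = alpha / 4, lplus = ln (2 * xi'), Lp = Lt, eps = epst, Cc = Ct,
                       alph = alpha, xi = xi', Mm = Mt\<rparr>"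
    and a10: "omega \<in> TT alpha xi'"
    and a11: "\<forall>beta\<in>{blo..bhi}. omega \<in> HH beta \<lparr>gam = alpha / 4, lplus = ln (2 * xi'), Lp = Lt,
                       eps = epst, Cc = Ct, alph = alpha, xi = xi', Mm = Mt\<rparr>"
begin

lemma epst_pos: "epst > 0" and Ct_pos: "Ct > 0" and Mt_pos: "Mt > 0"
  using a9 by (auto simp: valid_params_def)

lemma om_const: "\<bar>x\<bar> \<le> 3 * alpha / 4 \<Longrightarrow> omega x = 2 * xi'"
proof -
  assume "\<bar>x\<bar> \<le> 3 * alpha / 4"
  then have "x \<in> {- 3 * alpha / 4 .. 3 * alpha / 4}" by auto
  then show ?thesis using a10 unfolding TT_def by blast
qed

lemma phi_vanish: "z < 1/4 \<or> z > 3/4 \<Longrightarrow> dj k phi z = 0"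
proof (induction k arbitrary: z)
  case 0 then show ?case using a6 by auto
next
  case (Suc k)
  let ?S = "if z < 1/4 then {..<1/4} else {(3/4::real)<..}"
  have S: "open ?S" "z \<in> ?S" using Suc.prems by auto
  have "\<And>y. y \<in> ?S \<Longrightarrow> 0 = dj k phi y" using Suc.IH by (auto split: if_splits)
  then have "DERIV (dj k phi) z :> 0"
    using has_field_derivative_transform_within_open[OF DERIV_const S] by blast
  then show ?case by (simp add: dj_Suc' DERIV_imp_deriv)
qed

lemma dj_phi_bdd: "bdd_above (range (\<lambda>x. \<bar>dj k phi x\<bar>))"
proof -
  have "continuous_on {1/4..3/4} (dj k phi)"
    using smooth_funD'[OF a5] by (meson continuous_at_imp_continuous_on differentiable_imp_continuous_within)
  then have "continuous_on {1/4..3/4} (\<lambda>x. \<bar>dj k phi x\<bar>)" by (intro continuous_intros)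
  then have "bounded ((\<lambda>x. \<bar>dj k phi x\<bar>) ` {1/4..3/4})"
    by (intro compact_imp_bounded compact_continuous_image) auto
  then obtain M where M0: "\<forall>y\<in>(\<lambda>x. \<bar>dj k phi x\<bar>) ` {1/4..3/4}. \<bar>y\<bar> \<le> M"
    unfolding bounded_real by blast
  have M: "\<bar>dj k phi x\<bar> \<le> M" if "x \<in> {1/4..3/4}" for x
    using M0 that by fastforce
  have "\<bar>dj k phi x\<bar> \<le> max M 0" for x
    using M[of x] phi_vanish[of x k] by (cases "x \<in> {1/4..3/4}") auto
  then show ?thesis by (intro bdd_aboveI2) blast
qed

lemma le_supnorm: "\<bar>dj k phi x\<bar> \<le> supnorm (dj k phi)"
  unfolding supnorm_def by (rule cSUP_upper[OF _ dj_phi_bdd]) auto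

lemma le_AA: "k \<le> rr beta + 1 \<Longrightarrow> \<bar>dj k phi x\<bar> \<le> AA phi beta"
proof -
  assume k: "k \<le> rr beta + 1"
  have "supnorm (dj k phi) \<le> AA phi beta"
    unfolding AA_def by (rule Max_ge) (use k in auto)
  then show ?thesis using le_supnorm[of k x] by linarith
qed

lemma phi_nonzero: "\<exists>x. phi x \<noteq> 0"
proof (rule ccontr)
  assume "\<not> ?thesis"
  then have "(\<lambda>x. (phi x)^2) = (\<lambda>x. 0)" by auto
  then show False using a8 has_integral_0 has_integral_unique by (metis zero_neq_one)
qed

lemma AA_pos: "AA phi beta > 0"
proof -
  obtain x where "phi x \<noteq> 0" using phi_nonzero by blast
  then show ?thesis using le_AA[of 0 beta x] by simp
qed


definition "NN = rr bhi + 1"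
definition "Kmax = 2 + 2^NN * EE NN"
definition "M1 = max 1 (1/alpha) ^ NN"
definition "M2 = max 1 (1/alpha) powr bhi"
definition "H0 = Kmax / 2 * M1"
definition "Kh = Kmax * M2"

lemma NN_eq: "NN = rr bhi + 1" by (simp add: NN_def)
lemma Kmax_eq: "Kmax = 2 + 2^NN * EE NN" by (simp add: Kmax_def)
lemma M1_eq: "M1 = max 1 (1/alpha) ^ NN" by (simp add: M1_def)
lemma M2_eq: "M2 = max 1 (1/alpha) powr bhi" by (simp add: M2_def)
lemma H0_eq: "H0 = Kmax / 2 * M1" by (simp add: H0_def)
lemma Kh_eq: "Kh = Kmax * M2" by (simp add: Kh_def)

lemma Kmax_pos: "Kmax > 0" unfolding Kmax_def using EE_pos[of NN] by (simp add: add_pos_nonneg)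
lemma M1_ge: "M1 \<ge> 1" unfolding M1_def by simp
lemma M2_ge: "M2 \<ge> 1" unfolding M2_def using a1 a2 by (intro ge_one_powr_ge_zero) auto
lemma H0_pos: "H0 > 0" unfolding H0_def using Kmax_pos M1_ge by simp
lemma Kh_pos: "Kh > 0" unfolding Kh_def using Kmax_pos M2_ge by simp

end


locale inner = prop1 +
  fixes D :: nat and beta :: real and theta :: "nat \<Rightarrow> bool"
  assumes D0: "D > 0" and Deven: "even D" and bet: "beta \<in> {blo..bhi}"
begin

definition "r = rr beta"
definition "Ab = AA phi beta"
definition "lam = real D / alpha"
definition "cc = xi' * real D powr (- beta) / Ab"
definition "sg j = (if theta j then 1 else -1 :: real)"
definition "zz j x = lam * x + (real D / 2 - (real j - 1))"
definition "w j = sg j * cc / (2 * xi')"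
definition "u = (\<lambda>x. \<Sum>j\<in>{1..D}. w j * phi (lam * x + (real D / 2 - (real j - 1))))"

lemma D2: "real D \<ge> 2"
  using D0 Deven by (metis dvd_imp_le even_zero not_gr0 of_nat_le_iff of_nat_numeral)

lemma beta_pos: "beta > 0" using bet a1 by auto

lemma r_lt: "real r < beta" and r_ge: "beta - real r \<le> 1"
proof -
  have c1: "of_int \<lceil>beta\<rceil> - 1 < beta" "beta \<le> of_int \<lceil>beta\<rceil>" by (simp_all add: ceiling_correct)
  have "\<lceil>beta\<rceil> \<ge> 1" using beta_pos by (simp add: one_le_ceiling)
  then have "real r = of_int \<lceil>beta\<rceil> - 1" unfolding r_def rr_def by simp
  then show "real r < beta" "beta - real r \<le> 1" using c1 by auto
qed

lemma r_le: "r \<le> rr bhi"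
  unfolding r_def rr_def by (rule nat_mono) (use ceiling_mono[of beta bhi] bet in auto)

lemma Ab_pos: "Ab > 0" unfolding Ab_def by (rule AA_pos)

lemma lam_pos: "lam > 0" unfolding lam_def using D0 a3 by simp

lemma cc_eq: "cc / (2 * xi') = real D powr (- beta) / (2 * Ab)"
  unfolding cc_def using a4 by (simp add: field_simps)

lemma phij_eq: "phij phi alpha xi' beta D j x = cc * phi (lam * x + (real D / 2 - (real j - 1)))"
proof -
  have "real D / alpha * (x + alpha / 2) = lam * x + real D / 2"
    unfolding lam_def using a3 by (simp add: field_simps)
  then show ?thesis unfolding phij_def cc_def Ab_def by (simp add: algebra_simps)
qed

lemma f_eq: "ftheta omega phi alpha xi' beta D theta x = omega x + 2 * xi' * u x"
proof -
  have "2 * xi' * u x = (\<Sum>j\<in>{1..D}. (if theta j then 1 else -1) * phij phi alpha xi' beta D j x)"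
    unfolding u_def sum_distrib_left
    by (rule sum.cong) (use a4 in \<open>auto simp: phij_eq sg_def w_def\<close>)
  then show ?thesis unfolding ftheta_def by simp
qed

lemma u_smooth: "smooth_fun u"
  unfolding u_def by (intro smooth_sum smooth_affine a5) auto

lemma dj_u: "dj k u = (\<lambda>x. \<Sum>j\<in>{1..D}. w j * lam ^ k * dj k phi (lam * x + (real D / 2 - (real j - 1))))"
proof -
  have "dj k u = (\<lambda>x. \<Sum>j\<in>{1..D}. dj k (\<lambda>y. w j * phi (lam * y + (real D / 2 - (real j - 1)))) x)"
    unfolding u_def by (rule dj_sum) (auto intro: smooth_affine a5)
  also have "\<dots> = (\<lambda>x. \<Sum>j\<in>{1..D}. w j * lam ^ k * dj k phi (lam * x + (real D / 2 - (real j - 1))))"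
    by (simp add: dj_affine[OF a5])
  finally show ?thesis .
qed

lemma zz_in: "dj k phi (zz j x) \<noteq> 0 \<Longrightarrow> zz j x \<in> {1/4..3/4}"
  using phi_vanish by force

lemma u_bound: "k \<le> r + 1 \<Longrightarrow> \<bar>dj k u x\<bar> \<le> real D powr (- beta) / 2 * lam ^ k"
proof -
  assume k: "k \<le> r + 1"
  let ?F = "\<lambda>j. w j * lam ^ k * dj k phi (zz j x)"
  have "\<bar>\<Sum>j\<in>{1..D}. ?F j\<bar> \<le> real D powr (- beta) / 2 * lam ^ k"
  proof (rule sum_single_bound)
    show "0 \<le> real D powr (- beta) / 2 * lam ^ k" using lam_pos by simp
  next
    fix j
    have cc0: "cc \<ge> 0" unfolding cc_def using a4 Ab_pos by simp
    have "\<bar>w j\<bar> = cc / (2 * xi')" unfolding w_def sg_def using cc0 a4 by (simp add: abs_mult)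
    then have "\<bar>?F j\<bar> = cc / (2 * xi') * lam ^ k * \<bar>dj k phi (zz j x)\<bar>"
      using lam_pos by (simp add: abs_mult)
    then have "\<bar>?F j\<bar> = real D powr (- beta) / (2 * Ab) * lam ^ k * \<bar>dj k phi (zz j x)\<bar>"
      unfolding cc_eq .
    also have "\<dots> \<le> real D powr (- beta) / (2 * Ab) * lam ^ k * Ab"
      using le_AA[of k beta] k Ab_pos lam_pos unfolding Ab_def r_def
      by (intro mult_left_mono) auto
    also have "\<dots> = real D powr (- beta) / 2 * lam ^ k" using Ab_pos by simp
    finally show "\<bar>?F j\<bar> \<le> real D powr (- beta) / 2 * lam ^ k" .
  next
    fix i j assume "?F i \<noteq> 0" "?F j \<noteq> 0"
    then have "zz i x \<in> {1/4..3/4}" "zz j x \<in> {1/4..3/4}" using zz_in by auto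
    then have "\<bar>real i - real j\<bar> < 1" unfolding zz_def by auto
    then show "i = j" by linarith
  qed auto
  then show ?thesis unfolding dj_u zz_def by simp
qed

lemma u_zero: "x \<le> - alpha / 2 \<or> x \<ge> alpha / 2 \<Longrightarrow> u x = 0"
proof -
  assume x: "x \<le> - alpha / 2 \<or> x \<ge> alpha / 2"
  have "phi (zz j x) = 0" if j: "j \<in> {1..D}" for j
  proof -
    have "zz j x < 1/4 \<or> zz j x > 3/4"
    proof (cases "x \<le> - alpha / 2")
      case True
      then have "lam * x \<le> lam * (- alpha / 2)" using lam_pos by (intro mult_left_mono) auto
      also have "lam * (- alpha / 2) = - real D / 2" unfolding lam_def using a3 by simp
      finally show ?thesis unfolding zz_def using j by auto
    next
      case False
      then have "x \<ge> alpha / 2" using x by auto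
      then have "lam * x \<ge> lam * (alpha / 2)" using lam_pos by (intro mult_left_mono) auto
      moreover have "lam * (alpha / 2) = real D / 2" unfolding lam_def using a3 by simp
      moreover have "real j \<le> real D" using j by auto
      ultimately show ?thesis unfolding zz_def by auto
    qed
    then show ?thesis using phi_vanish[of "zz j x" 0] by simp
  qed
  then show ?thesis unfolding u_def zz_def[symmetric] by simp
qed


definition "Bd = real D powr (- beta) / 2"

lemma Dpow_le: "real D powr (- beta) \<le> 1"
proof -
  have "real D powr (- beta) \<le> real D powr 0" using D2 beta_pos by (intro powr_mono) auto
  then show ?thesis using D2 by simp
qed

lemma Bd_nonneg: "Bd \<ge> 0" unfolding Bd_def by simp
lemma Bd_le: "Bd \<le> 1/2" unfolding Bd_def using Dpow_le by simp

sublocale U: ubnd u Bd lam "r + 1"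
proof
  show "smooth_fun u" by (rule u_smooth)
  show "0 \<le> Bd" "Bd \<le> 1/2" by (rule Bd_nonneg, rule Bd_le)
  show "0 \<le> lam" using lam_pos by simp
  show "\<bar>u x\<bar> \<le> Bd" for x using u_bound[of 0 x] unfolding Bd_def by simp
  show "\<bar>dj i u x\<bar> \<le> Bd * lam ^ i" if "1 \<le> i" "i \<le> r + 1" for i x
    using u_bound[of i x] that unfolding Bd_def by simp
qed

lemma KK_le: "U.KK \<le> Kmax"
proof -
  have rN: "r + 1 \<le> NN" unfolding NN_eq using r_le by simp
  have "(2::real) ^ (r + 1) \<le> 2 ^ NN" using rN by (intro power_increasing) auto
  moreover have "EE (r + 1) \<le> EE NN" using EE_mono[OF rN] .
  ultimately have "2 ^ (r + 1) * EE (r + 1) \<le> 2 ^ NN * EE NN"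
    using EE_pos[of "r+1"] by (intro mult_mono) auto
  then show ?thesis unfolding U.KK_def Kmax_eq by simp
qed

lemma hb: "k \<le> r + 1 \<Longrightarrow> \<bar>dj k U.h x\<bar> \<le> Kmax * Bd * lam ^ k"
proof -
  assume k: "k \<le> r + 1"
  have "\<bar>dj k U.h x\<bar> \<le> U.KK * (Bd * lam ^ k)" using U.h_bound[OF k, of x] by (simp add: mult.assoc)
  also have "\<dots> \<le> Kmax * (Bd * lam ^ k)" using KK_le Bd_nonneg lam_pos by (intro mult_right_mono) auto
  finally show ?thesis by (simp add: mult.assoc)
qed

lemma h_H0: "j \<le> r \<Longrightarrow> \<bar>dj j U.h x\<bar> \<le> H0"
proof -
  assume j: "j \<le> r"
  have e1: "Bd * lam ^ j = (1/alpha)^j * (real D powr (- beta) * real D powr real j) / 2"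
    unfolding Bd_def lam_def using D2 by (simp add: powr_realpow power_divide field_simps)
  have "real D powr (- beta) * real D powr real j = real D powr (real j - beta)"
    by (simp add: powr_add[symmetric])
  also have "\<dots> \<le> real D powr 0" using D2 j r_lt by (intro powr_mono) auto
  finally have e2: "real D powr (- beta) * real D powr real j \<le> 1" using D2 by simp
  have e3: "(1/alpha)^j \<le> M1"
  proof -
    have "(1/alpha)^j \<le> (max 1 (1/alpha))^j" using a3 by (intro power_mono) auto
    also have "\<dots> \<le> (max 1 (1/alpha))^NN" unfolding NN_eq using j r_le by (intro power_increasing) auto
    finally show ?thesis unfolding M1_eq .
  qed
  have "Bd * lam ^ j \<le> M1 / 2" unfolding e1
    using e2 e3 a3 by (simp add: divide_right_mono mult_le_one[of "(1/alpha)^j" 1] 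
        order_trans[OF mult_left_mono[OF e2] ] mult.commute)
  then have "Kmax * (Bd * lam ^ j) \<le> Kmax * (M1 / 2)" using Kmax_pos by (intro mult_left_mono) auto
  moreover have "\<bar>dj j U.h x\<bar> \<le> Kmax * (Bd * lam ^ j)" using hb[of j x] j by (simp add: mult.assoc)
  moreover have "Kmax * (M1 / 2) = Kmax / 2 * M1" by simp
  ultimately show ?thesis unfolding H0_eq by linarith
qed

lemma h_holder: "\<bar>dj r U.h x - dj r U.h y\<bar> \<le> Kh * \<bar>y - x\<bar> powr (beta - real r)"
proof -
  define Q where "Q = Kmax * Bd * lam ^ r"
  define e where "e = beta - real r"
  have e: "0 < e" "e \<le> 1" unfolding e_def using r_lt r_ge by auto
  have d: "DERIV (dj r U.h) z :> dj (Suc r) U.h z" for z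
    unfolding dj_Suc' by (rule rdiff, rule smooth_funD'[OF U.h_smooth])
  have b0: "\<bar>dj r U.h z\<bar> \<le> Q" for z unfolding Q_def using hb[of r z] by simp
  have b1: "\<bar>dj (Suc r) U.h z\<bar> \<le> Q * lam" for z unfolding Q_def using hb[of "Suc r" z] by (simp add: algebra_simps)
  have "\<bar>dj r U.h x - dj r U.h y\<bar> \<le> 2 * Q * (lam * \<bar>x - y\<bar>) powr e"
    by (rule holder_gen[OF d b0 b1 lam_pos e])
  also have "2 * Q * (lam * \<bar>x - y\<bar>) powr e = Kmax * alpha powr (- beta) * \<bar>x - y\<bar> powr e"
  proof -
    have "lam ^ r * (lam * \<bar>x - y\<bar>) powr e = lam powr (real r + e) * \<bar>x - y\<bar> powr e"
      using lam_pos by (simp add: powr_realpow[symmetric] powr_mult powr_add)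
    also have "real r + e = beta" unfolding e_def by simp
    also have "lam powr beta = real D powr beta / alpha powr beta"
      unfolding lam_def by (rule powr_divide)
    finally have 1: "lam ^ r * (lam * \<bar>x - y\<bar>) powr e = real D powr beta / alpha powr beta * \<bar>x - y\<bar> powr e" .
    have 2: "real D powr (- beta) * real D powr beta = 1"
      using D2 by (simp add: powr_add[symmetric])
    have "2 * Q * (lam * \<bar>x - y\<bar>) powr e = Kmax * (real D powr (- beta) * (lam ^ r * (lam * \<bar>x - y\<bar>) powr e))"
      unfolding Q_def Bd_def by (simp add: algebra_simps)
    also have "\<dots> = Kmax * ((real D powr (- beta) * real D powr beta) / alpha powr beta * \<bar>x - y\<bar> powr e)"
      unfolding 1 by (simp add: algebra_simps)
    also have "\<dots> = Kmax * alpha powr (- beta) * \<bar>x - y\<bar> powr e"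
      unfolding 2 by (simp add: powr_minus_divide)
    finally show ?thesis .
  qed
  also have "\<dots> \<le> Kmax * M2 * \<bar>x - y\<bar> powr e"
  proof -
    have "alpha powr (- beta) = (1/alpha) powr beta" using a3 by (simp add: powr_minus_divide powr_divide)
    also have "\<dots> \<le> (max 1 (1/alpha)) powr beta" using a3 beta_pos by (intro powr_mono2) auto
    also have "\<dots> \<le> M2" unfolding M2_eq using bet by (intro powr_mono) auto
    finally have "alpha powr (- beta) \<le> M2" .
    then show ?thesis using Kmax_pos by (intro mult_right_mono mult_left_mono) auto
  qed
  finally show ?thesis unfolding Kh_eq e_def by (simp add: abs_minus_commute)
qed

end



lemma dj_add_partial:
  assumes td: "times_differentiable r g" and sh: "smooth_fun h"
  shows "j \<le> r \<Longrightarrow> dj j (\<lambda>x. g x + h x) = (\<lambda>x. dj j g x + dj j h x)"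
proof (induction j)
  case 0 then show ?case by simp
next
  case (Suc j)
  then have IH: "dj j (\<lambda>x. g x + h x) = (\<lambda>x. dj j g x + dj j h x)" and jr: "j < r" by auto
  have "deriv (\<lambda>x. dj j g x + dj j h x) = (\<lambda>x. deriv (dj j g) x + deriv (dj j h) x)"
  proof
    fix x
    have "dj j g differentiable at x" using td jr unfolding times_differentiable_def by blast
    moreover have "dj j h differentiable at x" using smooth_funD'[OF sh] .
    ultimately show "deriv (\<lambda>x. dj j g x + dj j h x) x = deriv (dj j g) x + deriv (dj j h) x"
      by (intro DERIV_imp_deriv DERIV_add rdiff)
  qed
  then show ?case by (simp add: dj_Suc' IH)
qed

lemma pw_add:
  fixes a b p :: real assumes p: "p > 0"
  shows "\<bar>a + b\<bar> powr p \<le> 2 powr p * (\<bar>a\<bar> powr p + \<bar>b\<bar> powr p)"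
proof -
  have "\<bar>a + b\<bar> \<le> 2 * max \<bar>a\<bar> \<bar>b\<bar>" by linarith
  then have "\<bar>a + b\<bar> powr p \<le> (2 * max \<bar>a\<bar> \<bar>b\<bar>) powr p" using p by (intro powr_mono2) auto
  also have "\<dots> = 2 powr p * max \<bar>a\<bar> \<bar>b\<bar> powr p" by (simp add: powr_mult)
  also have "max \<bar>a\<bar> \<bar>b\<bar> powr p \<le> \<bar>a\<bar> powr p + \<bar>b\<bar> powr p"
    by (cases "\<bar>a\<bar> \<le> \<bar>b\<bar>") (auto simp: max_def)
  finally show ?thesis by (simp add: mult_left_mono)
qed

lemma pw_bound:
  fixes a b p pm H fv ov :: real
  assumes p: "p > 0" "p \<le> pm" and b: "\<bar>b\<bar> \<le> H" and f: "0 \<le> fv" "fv \<le> 3/2 * ov"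
  shows "\<bar>a + b\<bar> powr p * fv \<le> (2 powr pm * (3/2)) * (\<bar>a\<bar> powr p * ov) + (2 powr pm * (3/2) * (max 1 H) powr pm) * ov"
proof -
  have ov: "ov \<ge> 0" using f by linarith
  have "\<bar>b\<bar> powr p \<le> (max 1 H) powr p" using b p by (intro powr_mono2) auto
  also have "\<dots> \<le> (max 1 H) powr pm" using p by (intro powr_mono) auto
  finally have bb: "\<bar>b\<bar> powr p \<le> (max 1 H) powr pm" .
  have 2: "2 powr p \<le> 2 powr pm" using p by (intro powr_mono) auto
  have "\<bar>a + b\<bar> powr p \<le> 2 powr p * (\<bar>a\<bar> powr p + \<bar>b\<bar> powr p)" by (rule pw_add[OF p(1)])
  also have "\<dots> \<le> 2 powr pm * (\<bar>a\<bar> powr p + (max 1 H) powr pm)"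
    using 2 bb by (intro mult_mono add_mono) auto
  finally have 1: "\<bar>a + b\<bar> powr p \<le> 2 powr pm * (\<bar>a\<bar> powr p + (max 1 H) powr pm)" .
  have "\<bar>a + b\<bar> powr p * fv \<le> 2 powr pm * (\<bar>a\<bar> powr p + (max 1 H) powr pm) * (3/2 * ov)"
    using 1 f by (intro mult_mono) auto
  then show ?thesis by (simp add: algebra_simps)
qed

lemma nn_bound:
  fixes F G ov :: "real \<Rightarrow> real"
  assumes [measurable]: "G \<in> borel_measurable borel" "ov \<in> borel_measurable borel"
    and G0: "\<And>x. G x \<ge> 0" and ov0: "\<And>x. ov x \<ge> 0"
    and IG: "(\<integral>\<^sup>+x. ennreal (G x) \<partial>lborel) \<le> ennreal C1"
    and Iov: "(\<integral>\<^sup>+x. ennreal (ov x) \<partial>lborel) = 1"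
    and F: "\<And>x. F x \<le> c1 * G x + c2 * ov x" and c: "c1 \<ge> 0" "c2 \<ge> 0" "C1 \<ge> 0"
  shows "(\<integral>\<^sup>+x. ennreal (F x) \<partial>lborel) \<le> ennreal (c1 * C1 + c2)"
proof -
  have "(\<integral>\<^sup>+x. ennreal (F x) \<partial>lborel) \<le> (\<integral>\<^sup>+x. ennreal c1 * ennreal (G x) + ennreal c2 * ennreal (ov x) \<partial>lborel)"
  proof (rule nn_integral_mono)
    fix x
    have "ennreal (F x) \<le> ennreal (c1 * G x + c2 * ov x)" using F by (rule ennreal_leI)
    also have "\<dots> = ennreal c1 * ennreal (G x) + ennreal c2 * ennreal (ov x)"
      using G0[of x] ov0[of x] c by (simp add: ennreal_plus ennreal_mult)
    finally show "ennreal (F x) \<le> ennreal c1 * ennreal (G x) + ennreal c2 * ennreal (ov x)" .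
  qed
  also have "\<dots> = ennreal c1 * (\<integral>\<^sup>+x. ennreal (G x) \<partial>lborel) + ennreal c2 * (\<integral>\<^sup>+x. ennreal (ov x) \<partial>lborel)"
    by (simp add: nn_integral_add nn_integral_cmult)
  also have "\<dots> \<le> ennreal c1 * ennreal C1 + ennreal c2 * 1"
    unfolding Iov using IG by (intro add_mono mult_left_mono) auto
  also have "\<dots> = ennreal (c1 * C1 + c2)" using c by (simp add: ennreal_plus ennreal_mult)
  finally show ?thesis .
qed


context prop1 begin

definition "pm = 2 * bhi + epst + 2 + epst / blo"
definition "Cn = 2 powr pm * (3/2) * (Ct + (max 1 H0) powr pm + (max 1 Kh) powr pm)"
definition "Pn = \<lparr>gam = alpha / 4, lplus = ln (2 * xi') + H0, Lp = Lt + [:Kh:], eps = epst, Cc = Cn,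
                  alph = alpha, xi = xi', Mm = 3/2 * Mt\<rparr>"

lemma pm_eq: "pm = 2 * bhi + epst + 2 + epst / blo" by (simp add: pm_def)
lemma Cn_eq: "Cn = 2 powr pm * (3/2) * (Ct + (max 1 H0) powr pm + (max 1 Kh) powr pm)" by (simp add: Cn_def)

lemma Cn_pos: "Cn > 0" unfolding Cn_def using Ct_pos by (intro mult_pos_pos add_pos_nonneg) auto

lemma Pn_valid: "valid_params Pn"
  unfolding Pn_def valid_params_def using a3 a4 epst_pos Cn_pos Mt_pos by simp

end

context inner begin

definition "f = ftheta omega phi alpha xi' beta D theta"
definition "g = (\<lambda>x. ln (omega x))"

abbreviation "P0 \<equiv> \<lparr>gam = alpha / 4, lplus = ln (2 * xi'), Lp = Lt,
                       eps = epst, Cc = Ct, alph = alpha, xi = xi', Mm = Mt\<rparr>"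

lemma om: "omega \<in> HH beta P0" using a11 bet by blast

lemma om_dens: "is_density omega" using om by (simp add: HH_def)
lemma om_td: "times_differentiable r g" using om by (simp add: HH_def Let_def r_def g_def)
lemma om_hold: "\<bar>x - y\<bar> \<le> alpha / 4 \<Longrightarrow> \<bar>dj r g x - dj r g y\<bar> \<le> fact r * poly Lt x * \<bar>y - x\<bar> powr (beta - real r)"
  using om by (simp add: HH_def Let_def r_def g_def)
lemma om_lplus: "j \<le> r \<Longrightarrow> \<bar>dj j g 0\<bar> \<le> ln (2 * xi')"
  using om by (simp add: HH_def Let_def r_def g_def)
lemma om_int: "j \<in> {1..r} \<Longrightarrow> (\<integral>\<^sup>+ x. ennreal (\<bar>dj j g x\<bar> powr ((2 * beta + epst) / real j) * omega x) \<partial>lborel) \<le> ennreal Ct"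
  using om by (simp add: HH_def Let_def r_def g_def)
lemma om_intL: "(\<integral>\<^sup>+ x. ennreal (\<bar>poly Lt x\<bar> powr (2 + epst / beta) * omega x) \<partial>lborel) \<le> ennreal Ct"
  using om by (simp add: HH_def Let_def)
lemma om_psi: "omega x \<le> Mt * psi x" using om by (simp add: HH_def Let_def)
lemma om_pos: "omega x > 0" using om by (simp add: HH_def Let_def)
lemma om_mono: "mono_on {..< - alpha} omega" using om by (simp add: HH_def Let_def)
lemma om_anti: "antimono_on {alpha <..} omega" using om by (simp add: HH_def Let_def)
lemma om_xi: "x \<in> {- alpha .. alpha} \<Longrightarrow> omega x \<ge> xi'" using om by (simp add: HH_def Let_def)

lemma f_alt: "f x = omega x + 2 * xi' * u x" unfolding f_def by (rule f_eq)

lemma u_half: "\<bar>u x\<bar> \<le> 1/2" using U.ub[of x] Bd_le by linarith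

lemma f_cases: "(\<bar>x\<bar> < alpha / 2 \<and> omega x = 2 * xi') \<or> (u x = 0 \<and> f x = omega x)"
proof (cases "\<bar>x\<bar> < alpha / 2")
  case True then show ?thesis using om_const[of x] a3 by auto
next
  case False then have "u x = 0" using u_zero by (intro u_zero) auto
  then show ?thesis by (simp add: f_alt)
qed

lemma f_bounds: "f x > 0" "f x \<le> 3/2 * omega x"
proof -
  have "f x > 0 \<and> f x \<le> 3/2 * omega x"
  proof (cases "\<bar>x\<bar> < alpha / 2 \<and> omega x = 2 * xi'")
    case True
    then have "f x = 2 * xi' * (1 + u x)" by (simp add: f_alt algebra_simps)
    then show ?thesis using True u_half[of x] a4 by (auto simp: abs_le_iff mult_le_cancel_left_pos)
  next
    case False then show ?thesis using f_cases[of x] om_pos[of x] by auto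
  qed
  then show "f x > 0" "f x \<le> 3/2 * omega x" by auto
qed

lemma f_xi: "x \<in> {- alpha .. alpha} \<Longrightarrow> f x \<ge> xi'"
proof -
  assume x: "x \<in> {- alpha .. alpha}"
  show ?thesis
  proof (cases "\<bar>x\<bar> < alpha / 2 \<and> omega x = 2 * xi'")
    case True
    then have "f x = 2 * xi' * (1 + u x)" by (simp add: f_alt algebra_simps)
    moreover have "1 + u x \<ge> 1/2" using u_half[of x] by linarith
    moreover have "2 * xi' * (1/2) \<le> 2 * xi' * (1 + u x)"
      using \<open>1 + u x \<ge> 1/2\<close> a4 by (intro mult_left_mono) auto
    ultimately show ?thesis by simp
  next
    case False then show ?thesis using f_cases[of x] om_xi[OF x] by auto
  qed
qed

lemma f_out: "x < - alpha \<or> x > alpha \<Longrightarrow> f x = omega x"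
  using f_cases[of x] a3 by auto

lemma lnf: "(\<lambda>x. ln (f x)) = (\<lambda>x. g x + U.h x)"
proof
  fix x
  show "ln (f x) = g x + U.h x"
  proof (cases "\<bar>x\<bar> < alpha / 2 \<and> omega x = 2 * xi'")
    case True
    then have "f x = 2 * xi' * (1 + u x)" by (simp add: f_alt algebra_simps)
    moreover have "1 + u x > 0" using u_half[of x] by linarith
    ultimately show ?thesis using True a4 unfolding g_def U.h_def by (simp add: ln_mult)
  next
    case False then show ?thesis using f_cases[of x] unfolding g_def U.h_def by auto
  qed
qed

lemma dj_lnf: "j \<le> r \<Longrightarrow> dj j (\<lambda>x. ln (f x)) = (\<lambda>x. dj j g x + dj j U.h x)"
  unfolding lnf by (rule dj_add_partial[OF om_td U.h_smooth])


lemma g_cont: "j \<le> r \<Longrightarrow> isCont (dj j g) x"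
proof (cases "j < r")
  case True
  then have "dj j g differentiable at x" using om_td unfolding times_differentiable_def by blast
  then show ?thesis by (rule differentiable_imp_continuous_within)
next
  case False
  assume "j \<le> r"
  then have jr: "j = r" using False by simp
  define e where "e = beta - real r"
  have e: "e > 0" unfolding e_def using r_lt by simp
  have "((\<lambda>y. dj r g y - dj r g x) \<longlongrightarrow> 0) (at x)"
  proof (rule Lim_null_comparison)
    show "\<forall>\<^sub>F y in at x. norm (dj r g y - dj r g x) \<le> fact r * \<bar>poly Lt x\<bar> * \<bar>y - x\<bar> powr e"
      unfolding eventually_at
    proof (intro exI[of _ "alpha / 4"] conjI ballI impI)
      show "alpha / 4 > 0" using a3 by simp
      fix y :: real assume "y \<in> UNIV" "y \<noteq> x \<and> dist y x < alpha / 4"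
      then have "\<bar>x - y\<bar> \<le> alpha / 4" by (simp add: dist_real_def abs_minus_commute)
      then have "\<bar>dj r g x - dj r g y\<bar> \<le> fact r * poly Lt x * \<bar>y - x\<bar> powr e"
        using om_hold unfolding e_def by blast
      also have "\<dots> \<le> fact r * \<bar>poly Lt x\<bar> * \<bar>y - x\<bar> powr e"
        by (intro mult_right_mono mult_left_mono) auto
      finally show "norm (dj r g y - dj r g x) \<le> fact r * \<bar>poly Lt x\<bar> * \<bar>y - x\<bar> powr e"
        by (simp add: abs_minus_commute)
    qed
    have "((\<lambda>y. \<bar>y - x\<bar>) \<longlongrightarrow> 0) (at x)"
      by (rule tendsto_eq_intros refl | simp)+
    then have "((\<lambda>y. \<bar>y - x\<bar> powr e) \<longlongrightarrow> 0) (at x)"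
      using e by (intro tendsto_zero_powrI) auto
    from tendsto_mult[OF tendsto_const this, of "fact r * \<bar>poly Lt x\<bar>"]
    show "((\<lambda>y. fact r * \<bar>poly Lt x\<bar> * \<bar>y - x\<bar> powr e) \<longlongrightarrow> 0) (at x)" by simp
  qed
  then show ?thesis unfolding jr isCont_def by (rule LIM_zero_cancel)
qed

lemma g_meas: "j \<le> r \<Longrightarrow> dj j g \<in> borel_measurable borel"
  by (intro borel_measurable_continuous_onI continuous_at_imp_continuous_on ballI g_cont)

lemma om_meas: "omega \<in> borel_measurable borel" using om_dens unfolding is_density_def by blast
lemma om_nn: "(\<integral>\<^sup>+ x. ennreal (omega x) \<partial>lborel) = 1" using om_dens unfolding is_density_def by blast

lemma u_cont: "isCont u x"
  using smooth_funD[OF u_smooth] by (rule differentiable_imp_continuous_within)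

lemma u_meas: "u \<in> borel_measurable borel"
  by (intro borel_measurable_continuous_onI continuous_at_imp_continuous_on ballI u_cont)

lemma f_fun: "f = (\<lambda>x. omega x + 2 * xi' * u x)" using f_alt by auto

lemma f_meas: "f \<in> borel_measurable borel"
  unfolding f_fun using om_meas u_meas by measurable

lemma phi_integrable: "integrable lborel phi"
proof -
  have "continuous_on {1/4..3/4} phi"
    using smooth_funD[OF a5] by (meson continuous_at_imp_continuous_on differentiable_imp_continuous_within)
  then have "integrable lborel (\<lambda>x. indicator {1/4..3/4::real} x *\<^sub>R phi x)"
    by (intro borel_integrable_compact) auto
  moreover have "(\<lambda>x. indicator {1/4..3/4::real} x *\<^sub>R phi x) = phi"
  proof
    fix x :: real
    show "indicator {1/4..3/4::real} x *\<^sub>R phi x = phi x"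
    proof (cases "x \<in> {1/4..3/4}")
      case True then show ?thesis by simp
    next
      case False
      then have "x \<notin> {1/4<..<3/4}" by auto
      then have "phi x = 0" using a6 by blast
      then show ?thesis by simp
    qed
  qed
  ultimately show ?thesis by simp
qed

lemma phi_int0: "integral\<^sup>L lborel phi = 0"
  using has_integral_integral_real[OF phi_integrable] a7 has_integral_unique by blast

lemma term_int: "integrable lborel (\<lambda>x. phi (b + lam * x))" "integral\<^sup>L lborel (\<lambda>x. phi (b + lam * x)) = 0"
proof -
  show "integrable lborel (\<lambda>x. phi (b + lam * x))"
    using lborel_integrable_real_affine[OF phi_integrable, of lam b] lam_pos by simp
  have "integral\<^sup>L lborel phi = \<bar>lam\<bar> *\<^sub>R integral\<^sup>L lborel (\<lambda>x. phi (b + lam * x))"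
    using lborel_integral_real_affine[of lam phi b] lam_pos by simp
  then show "integral\<^sup>L lborel (\<lambda>x. phi (b + lam * x)) = 0" using phi_int0 lam_pos by simp
qed

lemma u_integrable: "integrable lborel u" and u_int0: "integral\<^sup>L lborel u = 0"
proof -
  have ufun: "u = (\<lambda>x. \<Sum>j\<in>{1..D}. w j * phi ((real D / 2 - (real j - 1)) + lam * x))"
    unfolding u_def by (simp add: add.commute)
  show "integrable lborel u" unfolding ufun
    by (auto intro!: term_int)
  show "integral\<^sup>L lborel u = 0" unfolding ufun
    by (simp add: integral_sum integrable_mult_right term_int)
qed

lemma om_integrable: "integrable lborel omega" and om_int1: "integral\<^sup>L lborel omega = 1"
proof -
  have nn: "AE x in lborel. 0 \<le> omega x" using om_pos by (simp add: less_imp_le)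
  show oi: "integrable lborel omega"
  proof (rule integrableI_nn_integral_finite[OF _ nn, of 1])
    show "omega \<in> borel_measurable lborel" using om_meas by simp
  qed (simp add: om_nn)
  have "ennreal (integral\<^sup>L lborel omega) = 1" using nn_integral_eq_integral[OF oi nn] om_nn by simp
  then show "integral\<^sup>L lborel omega = 1"
    by (metis ennreal_1 ennreal_inj integral_nonneg_AE nn zero_le_one)
qed

lemma f_density: "is_density f"
proof -
  have fi: "integrable lborel f" unfolding f_fun
    by (auto intro!: om_integrable u_integrable)
  have "integral\<^sup>L lborel f = 1" unfolding f_fun
    by (simp add: om_integrable u_integrable om_int1 u_int0)
  moreover have "(\<integral>\<^sup>+ x. ennreal (f x) \<partial>lborel) = ennreal (integral\<^sup>L lborel f)"
    by (rule nn_integral_eq_integral[OF fi]) (simp add: f_bounds less_imp_le)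
  ultimately show ?thesis unfolding is_density_def using f_meas f_bounds(1) less_imp_le by auto
qed


lemma lnf_split: "j \<le> r \<Longrightarrow> dj j (\<lambda>x. ln (f x)) x = dj j g x + dj j U.h x"
  using dj_lnf by simp

lemma c1_ge: "2 powr pm * (3/2) \<ge> (0::real)" by simp

lemma f_HH: "f \<in> HH beta Pn"
proof -
  have c1: "is_density f" by (rule f_density)
  have c2: "times_differentiable r (\<lambda>x. ln (f x))"
    unfolding times_differentiable_def
  proof (intro allI impI)
    fix j x assume j: "j < r"
    have "dj j g differentiable at x" using om_td j unfolding times_differentiable_def by blast
    moreover have "dj j U.h differentiable at x" using smooth_funD'[OF U.h_smooth] .
    ultimately have "(\<lambda>x. dj j g x + dj j U.h x) differentiable at x" by (rule differentiable_add)
    then show "dj j (\<lambda>x. ln (f x)) differentiable at x" using dj_lnf[of j] j by simp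
  qed
  have c3: "\<forall>x y. \<bar>x - y\<bar> \<le> alpha / 4 \<longrightarrow> \<bar>dj r (\<lambda>x. ln (f x)) x - dj r (\<lambda>x. ln (f x)) y\<bar>
      \<le> fact r * poly (Lt + [:Kh:]) x * \<bar>y - x\<bar> powr (beta - real r)"
  proof (intro allI impI)
    fix x y :: real assume xy: "\<bar>x - y\<bar> \<le> alpha / 4"
    define T where "T = \<bar>y - x\<bar> powr (beta - real r)"
    have T0: "T \<ge> 0" unfolding T_def by simp
    have "\<bar>dj r (\<lambda>x. ln (f x)) x - dj r (\<lambda>x. ln (f x)) y\<bar>
        = \<bar>(dj r g x - dj r g y) + (dj r U.h x - dj r U.h y)\<bar>" using lnf_split[of r] by simp
    also have "\<dots> \<le> \<bar>dj r g x - dj r g y\<bar> + \<bar>dj r U.h x - dj r U.h y\<bar>" by (rule abs_triangle_ineq)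
    also have "\<dots> \<le> fact r * poly Lt x * T + Kh * T"
      using om_hold[OF xy] h_holder[of x y] unfolding T_def by (intro add_mono) auto
    also have "Kh * T \<le> fact r * Kh * T"
    proof -
      have "1 * (Kh * T) \<le> fact r * (Kh * T)" using Kh_pos T0 by (intro mult_right_mono) auto
      then show ?thesis by (simp add: mult.assoc)
    qed
    finally show "\<bar>dj r (\<lambda>x. ln (f x)) x - dj r (\<lambda>x. ln (f x)) y\<bar>
      \<le> fact r * poly (Lt + [:Kh:]) x * \<bar>y - x\<bar> powr (beta - real r)"
      unfolding T_def by (simp add: algebra_simps)
  qed
  have c4: "\<forall>j\<le>r. \<bar>dj j (\<lambda>x. ln (f x)) 0\<bar> \<le> ln (2 * xi') + H0"
  proof (intro allI impI)
    fix j assume j: "j \<le> r"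
    have "\<bar>dj j (\<lambda>x. ln (f x)) 0\<bar> \<le> \<bar>dj j g 0\<bar> + \<bar>dj j U.h 0\<bar>"
      using lnf_split[OF j, of 0] by simp
    then show "\<bar>dj j (\<lambda>x. ln (f x)) 0\<bar> \<le> ln (2 * xi') + H0"
      using om_lplus[OF j] h_H0[OF j, of 0] by linarith
  qed
  have c5: "\<forall>j\<in>{1..r}. (\<integral>\<^sup>+ x. ennreal (\<bar>dj j (\<lambda>x. ln (f x)) x\<bar> powr ((2 * beta + epst) / real j) * f x) \<partial>lborel)
            \<le> ennreal Cn"
  proof
    fix j assume j: "j \<in> {1..r}"
    define p where "p = (2 * beta + epst) / real j"
    have jr: "j \<le> r" using j by auto
    have p0: "p > 0" unfolding p_def using j beta_pos epst_pos by auto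
    have "p \<le> 2 * beta + epst" unfolding p_def using j beta_pos epst_pos
      by (auto simp: divide_le_eq intro!: order_trans[of _ "(2 * beta + epst) * 1"] mult_left_mono)
    also have "\<dots> \<le> pm"
    proof -
      have "epst / blo \<ge> 0" using epst_pos a1 by simp
      then show ?thesis unfolding pm_eq using bet by auto
    qed
    finally have ppm: "p \<le> pm" .
    define c1 where "c1 = 2 powr pm * (3/2 :: real)"
    have Gm: "(\<lambda>x. \<bar>dj j g x\<bar> powr p * omega x) \<in> borel_measurable borel"
      using g_meas[OF jr] om_meas by measurable
    have "(\<integral>\<^sup>+ x. ennreal (\<bar>dj j (\<lambda>x. ln (f x)) x\<bar> powr p * f x) \<partial>lborel)
        \<le> ennreal (c1 * Ct + c1 * (max 1 H0) powr pm)"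
    proof (rule nn_bound[OF Gm om_meas _ _ _ om_nn])
      show "\<bar>dj j g x\<bar> powr p * omega x \<ge> 0" for x using om_pos[of x] by simp
      show "omega x \<ge> 0" for x using om_pos[of x] by simp
      show "(\<integral>\<^sup>+ x. ennreal (\<bar>dj j g x\<bar> powr p * omega x) \<partial>lborel) \<le> ennreal Ct"
        using om_int[OF j] unfolding p_def .
      show "\<bar>dj j (\<lambda>x. ln (f x)) x\<bar> powr p * f x \<le> c1 * (\<bar>dj j g x\<bar> powr p * omega x) + c1 * max 1 H0 powr pm * omega x" for x
        unfolding lnf_split[OF jr] c1_def
        by (rule pw_bound[OF p0 ppm h_H0[OF jr] less_imp_le[OF f_bounds(1)] f_bounds(2)])
      show "c1 \<ge> 0" "c1 * max 1 H0 powr pm \<ge> 0" "Ct \<ge> 0" unfolding c1_def using Ct_pos by auto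
    qed
    also have "\<dots> \<le> ennreal Cn"
      unfolding Cn_eq c1_def by (intro ennreal_leI mult_left_mono) (auto simp: algebra_simps)
    finally show "(\<integral>\<^sup>+ x. ennreal (\<bar>dj j (\<lambda>x. ln (f x)) x\<bar> powr ((2 * beta + epst) / real j) * f x) \<partial>lborel)
            \<le> ennreal Cn" unfolding p_def .
  qed
  have c6: "(\<integral>\<^sup>+ x. ennreal (\<bar>poly (Lt + [:Kh:]) x\<bar> powr (2 + epst / beta) * f x) \<partial>lborel) \<le> ennreal Cn"
  proof -
    define p where "p = 2 + epst / beta"
    have p0: "p > 0" unfolding p_def using beta_pos epst_pos by (simp add: add_pos_nonneg)
    have "epst / beta \<le> epst / blo" using bet a1 epst_pos by (intro divide_left_mono) auto
    then have ppm: "p \<le> pm" unfolding p_def pm_eq using a1 a2 epst_pos by auto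
    define c1 where "c1 = 2 powr pm * (3/2 :: real)"
    have pm_meas: "(\<lambda>x. poly Lt x) \<in> borel_measurable borel"
      by (intro borel_measurable_continuous_onI continuous_intros)
    have Gm: "(\<lambda>x. \<bar>poly Lt x\<bar> powr p * omega x) \<in> borel_measurable borel"
      using pm_meas om_meas by measurable
    have "(\<integral>\<^sup>+ x. ennreal (\<bar>poly Lt x + Kh\<bar> powr p * f x) \<partial>lborel)
        \<le> ennreal (c1 * Ct + c1 * (max 1 Kh) powr pm)"
    proof (rule nn_bound[OF Gm om_meas _ _ _ om_nn])
      show "\<bar>poly Lt x\<bar> powr p * omega x \<ge> 0" for x using om_pos[of x] by simp
      show "omega x \<ge> 0" for x using om_pos[of x] by simp
      show "(\<integral>\<^sup>+ x. ennreal (\<bar>poly Lt x\<bar> powr p * omega x) \<partial>lborel) \<le> ennreal Ct"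
        using om_intL unfolding p_def .
      show "\<bar>poly Lt x + Kh\<bar> powr p * f x \<le> c1 * (\<bar>poly Lt x\<bar> powr p * omega x) + c1 * max 1 Kh powr pm * omega x" for x
        unfolding c1_def
        by (rule pw_bound[OF p0 ppm _ less_imp_le[OF f_bounds(1)] f_bounds(2)]) (use Kh_pos in simp)
      show "c1 \<ge> 0" "c1 * max 1 Kh powr pm \<ge> 0" "Ct \<ge> 0" unfolding c1_def using Ct_pos by auto
    qed
    also have "\<dots> \<le> ennreal Cn"
      unfolding Cn_eq c1_def by (intro ennreal_leI mult_left_mono) (auto simp: algebra_simps)
    finally show ?thesis unfolding p_def by simp
  qed
  have c7: "\<forall>x. f x \<le> 3/2 * Mt * psi x"
  proof
    fix x
    have "f x \<le> 3/2 * omega x" by (rule f_bounds(2))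
    also have "\<dots> \<le> 3/2 * (Mt * psi x)" using om_psi[of x] by simp
    finally show "f x \<le> 3/2 * Mt * psi x" by simp
  qed
  have c8: "\<forall>x. f x > 0" using f_bounds(1) by blast
  have c9: "mono_on {..< - alpha} f"
    using om_mono f_out unfolding monotone_on_def by auto
  have c10: "antimono_on {alpha <..} f"
    using om_anti f_out unfolding monotone_on_def by auto
  have c11: "\<forall>x\<in>{- alpha .. alpha}. f x \<ge> xi'" using f_xi by blast
  show ?thesis
    unfolding HH_def Pn_def Let_def mem_Collect_eq params.select_convs r_def[symmetric]
    using c1 c2 c3 c4 c5 c6 c7 c8 c9 c10 c11 by blast
qed

end


context prop1 begin

lemma main: "\<exists>P. valid_params P \<and>
           (\<forall>D::nat. D > 0 \<longrightarrow> even D \<longrightarrow>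
              (\<forall>beta\<in>{blo..bhi}. JJ omega phi alpha xi' beta D \<subseteq> HH beta P))"
proof (intro exI[of _ Pn] conjI Pn_valid allI impI ballI subsetI)
  fix D :: nat and beta :: real and F
  assume D: "D > 0" "even D" and b: "beta \<in> {blo..bhi}" and F: "F \<in> JJ omega phi alpha xi' beta D"
  then obtain theta where Fe: "F = ftheta omega phi alpha xi' beta D theta" unfolding JJ_def by blast
  interpret I: inner blo bhi alpha xi' phi omega Lt epst Ct Mt D beta theta
    by unfold_locales (use D b in auto)
  show "F \<in> HH beta Pn" using I.f_HH unfolding I.f_def Fe .
qed

end

theorem proposition1:
  fixes blo bhi alpha xi' :: real and phi omega :: "real \<Rightarrow> real"
    and Lt :: "real poly" and epst Ct Mt :: real
  assumes "0 < blo" "blo < bhi" "alpha > 0" "xi' > 0"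
    and "smooth_fun phi"
    and "\<forall>x. x \<notin> {1/4 <..< 3/4} \<longrightarrow> phi x = 0"
    and "(phi has_integral 0) UNIV"
    and "((\<lambda>x. (phi x)^2) has_integral 1) UNIV"
    and "valid_params \<lparr>gam = alpha / 4, lplus = ln (2 * xi'), Lp = Lt, eps = epst, Cc = Ct,
                       alph = alpha, xi = xi', Mm = Mt\<rparr>"
    and "omega \<in> TT alpha xi'"
    and "\<forall>beta\<in>{blo..bhi}. omega \<in> HH beta \<lparr>gam = alpha / 4, lplus = ln (2 * xi'), Lp = Lt,
                       eps = epst, Cc = Ct, alph = alpha, xi = xi', Mm = Mt\<rparr>"
  shows "\<exists>P. valid_params P \<and>
           (\<forall>D::nat. D > 0 \<longrightarrow> even D \<longrightarrow>
              (\<forall>beta\<in>{blo..bhi}. JJ omega phi alpha xi' beta D \<subseteq> HH beta P))"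
proof -
  interpret prop1 blo bhi alpha xi' phi omega Lt epst Ct Mt
    by unfold_locales (use assms in auto)
  show ?thesis by (rule main)
qed


end
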